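(* Let $\mathcal E_1,\mathcal E_2$ be CPTP maps on system $A$, $p\in[0,1]$, and let $P^A$ be the linear map $P^A[X]=p\,\mathcal E_1[X]+(1-p)\,\mathcal E_2[X^T]$. Then for every bipartite state $\rho=\rho^{AB}$ (finite-dimensional), $$E^{A|B}\big((P^A\otimes\mathrm{id}^B)[\rho]\big)\le E^{A|B}(\rho),$$ where $(P^A\otimes\mathrm{id}^B)[\rho]=p(\mathcal E_1^A\otimes\mathrm{id}^B)[\rho]+(1-p)(\mathcal E_2^A\otimes\mathrm{id}^B)[\rho^{T_A}]$.
   Context: For a Hermitian operator $X$ of unit trace on $\mathcal H_A\otimes\mathcal H_B$ (not necessarily positive), the negativity is $E^{A|B}(X)=\frac{\|X^{T_B}\|_1-1}{2}$, where $T_A,T_B$ denote partial transposition on $A$ resp. $B$ (in fixed bases) and $\|M\|_1=\mathrm{Tr}\sqrt{M^\dagger M}$. *)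

theory Defs
  imports "Jordan_Normal_Form.Matrix"
begin

text \<open>A bipartite system A|B with dimensions dA, dB: the basis vector with A-index i < dA and
B-index k < dB has flat index i * dB + k (so A is the first tensor factor).\<close>

definition mtrace :: "complex mat \<Rightarrow> complex" where
  "mtrace M = (\<Sum>i<dim_row M. M $$ (i,i))"

definition adj :: "complex mat \<Rightarrow> complex mat" where
  "adj M = mat (dim_col M) (dim_row M) (\<lambda>(i,j). cnj (M $$ (j,i)))"

definition hermitian :: "nat \<Rightarrow> complex mat \<Rightarrow> bool" where
  "hermitian n M \<longleftrightarrow> M \<in> carrier_mat n n \<and> adj M = M"

definition psd :: "nat \<Rightarrow> complex mat \<Rightarrow> bool" where
  "psd n M \<longleftrightarrow> hermitian n M \<and>
     (\<forall>v. dim_vec v = n \<longrightarrow> 0 \<le> Re (\<Sum>i<n. cnj (v $ i) * (M *\<^sub>v v) $ i))"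

definition psd_sqrt :: "complex mat \<Rightarrow> complex mat" where
  "psd_sqrt M = (THE S. psd (dim_row M) S \<and> S * S = M)"

definition trace_norm :: "complex mat \<Rightarrow> real" where
  "trace_norm M = Re (mtrace (psd_sqrt (adj M * M)))"

definition density_op :: "nat \<Rightarrow> complex mat \<Rightarrow> bool" where
  "density_op n \<rho> \<longleftrightarrow> psd n \<rho> \<and> mtrace \<rho> = 1"

definition ptrans_A :: "nat \<Rightarrow> nat \<Rightarrow> complex mat \<Rightarrow> complex mat" where
  "ptrans_A dA dB X = mat (dA*dB) (dA*dB)
     (\<lambda>(r,c). X $$ ((c div dB) * dB + r mod dB, (r div dB) * dB + c mod dB))"

definition ptrans_B :: "nat \<Rightarrow> nat \<Rightarrow> complex mat \<Rightarrow> complex mat" where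
  "ptrans_B dA dB X = mat (dA*dB) (dA*dB)
     (\<lambda>(r,c). X $$ ((r div dB) * dB + c mod dB, (c div dB) * dB + r mod dB))"

definition negativity :: "nat \<Rightarrow> nat \<Rightarrow> complex mat \<Rightarrow> real" where
  "negativity dA dB X = (trace_norm (ptrans_B dA dB X) - 1) / 2"

text \<open>(E \<otimes> id_n)[X] for a map E on dA x dA matrices and X a (dA*n)-dim operator:
apply E to each block X_{kl} = (X((i,k),(j,l)))_{i,j}.\<close>
definition tensor_id :: "nat \<Rightarrow> nat \<Rightarrow> (complex mat \<Rightarrow> complex mat) \<Rightarrow> complex mat \<Rightarrow> complex mat" where
  "tensor_id dA n E X = mat (dA*n) (dA*n)
     (\<lambda>(r,c). E (mat dA dA (\<lambda>(i,j). X $$ (i * n + r mod n, j * n + c mod n))) $$ (r div n, c div n))"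

definition linear_map_on :: "nat \<Rightarrow> (complex mat \<Rightarrow> complex mat) \<Rightarrow> bool" where
  "linear_map_on d E \<longleftrightarrow>
     (\<forall>X \<in> carrier_mat d d. E X \<in> carrier_mat d d) \<and>
     (\<forall>X \<in> carrier_mat d d. \<forall>Y \<in> carrier_mat d d. \<forall>a b :: complex.
        E (a \<cdot>\<^sub>m X + b \<cdot>\<^sub>m Y) = a \<cdot>\<^sub>m E X + b \<cdot>\<^sub>m E Y)"

definition cptp :: "nat \<Rightarrow> (complex mat \<Rightarrow> complex mat) \<Rightarrow> bool" where
  "cptp d E \<longleftrightarrow> linear_map_on d E \<and>
     (\<forall>X \<in> carrier_mat d d. mtrace (E X) = mtrace X) \<and>
     (\<forall>n. \<forall>X. psd (d*n) X \<longrightarrow> psd (d*n) (tensor_id d n E X))"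

end

theory Submission
  imports Defs "Jordan_Normal_Form.Spectral_Radius"
begin


declare index_mult_mat(1)[simp del] index_mult_mat_vec[simp del]

lemma sum_delta_mult: "finite S \<Longrightarrow> i \<in> S \<Longrightarrow> (\<Sum>l\<in>S. (if i = l then x l else 0) * y l) = x i * (y i :: 'a :: semiring_0)"
  by (simp add: if_distrib[of "\<lambda>z. z * _"] cong: if_cong)

lemma mult_entry:
  assumes "A \<in> carrier_mat n k" "B \<in> carrier_mat k m" "i < n" "j < m"
  shows "(A * B) $$ (i,j) = (\<Sum>l<k. A $$ (i,l) * B $$ (l,j))"
  using assms by (auto simp: index_mult_mat(1) scalar_prod_def lessThan_atLeast0 intro!: sum.cong)

lemma mult_vec_entry:
  assumes "A \<in> carrier_mat n k" "v \<in> carrier_vec k" "i < n"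
  shows "(A *\<^sub>v v) $ i = (\<Sum>l<k. A $$ (i,l) * v $ l)"
  using assms by (auto simp: index_mult_mat_vec scalar_prod_def lessThan_atLeast0 intro!: sum.cong)

lemma adj_carrier[simp]: "M \<in> carrier_mat r c \<Longrightarrow> adj M \<in> carrier_mat c r"
  by (auto simp: adj_def)
lemma adj_dims[simp]: "dim_row (adj M) = dim_col M" "dim_col (adj M) = dim_row M"
  by (auto simp: adj_def)
lemma adj_index[simp]: "i < dim_col M \<Longrightarrow> j < dim_row M \<Longrightarrow> adj M $$ (i,j) = cnj (M $$ (j,i))"
  by (auto simp: adj_def)
lemma adj_adj[simp]: "adj (adj M) = M"
  by (rule eq_matI) auto
lemma adj_mult:
  assumes "A \<in> carrier_mat n k" "B \<in> carrier_mat k m"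
  shows "adj (A * B) = adj B * adj A"
proof (rule eq_matI)
  fix i j assume "i < dim_row (adj B * adj A)" "j < dim_col (adj B * adj A)"
  then have ij: "i < m" "j < n" using assms by auto
  show "adj (A * B) $$ (i, j) = (adj B * adj A) $$ (i, j)"
    using assms ij by (simp add: mult_entry[of _ m k _ n] mult_entry[of _ n k _ m] mult.commute)
qed (use assms in auto)
lemma adj_one[simp]: "adj (1\<^sub>m n) = 1\<^sub>m n"
  by (rule eq_matI) auto
lemma adj_add: "A \<in> carrier_mat n m \<Longrightarrow> B \<in> carrier_mat n m \<Longrightarrow> adj (A + B) = adj A + adj B"
  by (rule eq_matI) auto
lemma adj_minus: "A \<in> carrier_mat n m \<Longrightarrow> B \<in> carrier_mat n m \<Longrightarrow> adj (A - B) = adj A - adj B"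
  by (rule eq_matI) auto
lemma adj_smult: "adj (c \<cdot>\<^sub>m A) = cnj c \<cdot>\<^sub>m adj A"
  by (rule eq_matI) auto

lemma mtrace_comm:
  assumes "A \<in> carrier_mat n m" "B \<in> carrier_mat m n"
  shows "mtrace (A * B) = mtrace (B * A)"
proof -
  have "mtrace (A * B) = (\<Sum>i<n. \<Sum>l<m. A $$ (i,l) * B $$ (l,i))"
    using assms by (auto simp: mtrace_def mult_entry intro!: sum.cong)
  also have "\<dots> = (\<Sum>l<m. \<Sum>i<n. B $$ (l,i) * A $$ (i,l))"
    by (subst sum.swap) (simp add: mult.commute)
  also have "\<dots> = mtrace (B * A)"
    using assms by (auto simp: mtrace_def mult_entry intro!: sum.cong)
  finally show ?thesis .
qed

lemma mtrace_add: "A \<in> carrier_mat n n \<Longrightarrow> B \<in> carrier_mat n n \<Longrightarrow> mtrace (A + B) = mtrace A + mtrace B"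
  by (auto simp: mtrace_def sum.distrib)
lemma mtrace_minus: "A \<in> carrier_mat n n \<Longrightarrow> B \<in> carrier_mat n n \<Longrightarrow> mtrace (A - B) = mtrace A - mtrace B"
  by (auto simp: mtrace_def sum_subtractf)
lemma mtrace_smult: "A \<in> carrier_mat n n \<Longrightarrow> mtrace (c \<cdot>\<^sub>m A) = c * mtrace A"
  by (auto simp: mtrace_def sum_distrib_left intro!: sum.cong)

definition dgr :: "nat \<Rightarrow> (nat \<Rightarrow> real) \<Rightarrow> complex mat" where
  "dgr n d = mat n n (\<lambda>(i,j). if i = j then complex_of_real (d i) else 0)"

lemma dgr_carrier[simp]: "dgr n d \<in> carrier_mat n n" by (simp add: dgr_def)
lemma dgr_dims[simp]: "dim_row (dgr n d) = n" "dim_col (dgr n d) = n" by (auto simp: dgr_def)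
lemma dgr_index[simp]: "i < n \<Longrightarrow> j < n \<Longrightarrow> dgr n d $$ (i,j) = (if i = j then complex_of_real (d i) else 0)"
  by (simp add: dgr_def)
lemma adj_dgr[simp]: "adj (dgr n d) = dgr n d"
  by (rule eq_matI) auto
lemma dgr_mult: "dgr n d * dgr n e = dgr n (\<lambda>i. d i * e i)"
proof (rule eq_matI)
  fix i j assume "i < dim_row (dgr n (\<lambda>i. d i * e i))" "j < dim_col (dgr n (\<lambda>i. d i * e i))"
  then have ij: "i < n" "j < n" by auto
  have "(dgr n d * dgr n e) $$ (i,j) = (\<Sum>l<n. (if i = l then complex_of_real (d l) else 0) * dgr n e $$ (l,j))"
    using ij by (subst mult_entry[of _ n n _ n]) (auto intro!: sum.cong)
  also have "\<dots> = dgr n (\<lambda>i. d i * e i) $$ (i,j)" using ij by (subst sum_delta_mult) auto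
  finally show "(dgr n d * dgr n e) $$ (i,j) = dgr n (\<lambda>i. d i * e i) $$ (i,j)" .
qed auto
lemma dgr_minus: "dgr n d - dgr n e = dgr n (\<lambda>i. d i - e i)"
  by (rule eq_matI) auto
lemma mtrace_dgr: "mtrace (dgr n d) = (\<Sum>i<n. complex_of_real (d i))"
  by (simp add: mtrace_def)

definition unitary :: "nat \<Rightarrow> complex mat \<Rightarrow> bool" where
  "unitary n U \<longleftrightarrow> U \<in> carrier_mat n n \<and> adj U * U = 1\<^sub>m n \<and> U * adj U = 1\<^sub>m n"

lemma unitaryI: assumes "U \<in> carrier_mat n n" "adj U * U = 1\<^sub>m n" shows "unitary n U"
  using assms mat_mult_left_right_inverse[of "adj U" n U] unfolding unitary_def by auto

lemma unitary_mult: assumes "unitary n U" "unitary n V" shows "unitary n (U * V)"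
proof -
  have U: "U \<in> carrier_mat n n" and V: "V \<in> carrier_mat n n" using assms unitary_def by auto
  have "adj (U * V) * (U * V) = adj V * adj U * (U * V)"
    using U V by (simp add: adj_mult[OF U V])
  also have "\<dots> = adj V * (adj U * (U * V))" using U V by (simp add: assoc_mult_mat[of _ n n _ n _ n])
  also have "\<dots> = adj V * ((adj U * U) * V)" using U V by (simp add: assoc_mult_mat[of _ n n _ n _ n])
  also have "\<dots> = 1\<^sub>m n" using assms V unfolding unitary_def by (auto simp: adj_carrier)
  finally show ?thesis using U V by (intro unitaryI) auto
qed



lemma unit_eigenvector:
  assumes A: "A \<in> carrier_mat n n" and n: "0 < n"
  shows "\<exists>e u. u \<in> carrier_vec n \<and> A *\<^sub>v u = e \<cdot>\<^sub>v u \<and> (\<Sum>i<n. (cmod (u $ i))\<^sup>2) = 1"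
proof -
  from spectrum_non_empty[OF A n] obtain e where "eigenvalue A e" by (auto simp: spectrum_def)
  then obtain v where v: "v \<in> carrier_vec n" "v \<noteq> 0\<^sub>v n" "A *\<^sub>v v = e \<cdot>\<^sub>v v"
    using A by (auto simp: eigenvalue_def eigenvector_def)
  define s where "s = (\<Sum>i<n. (cmod (v $ i))\<^sup>2)"
  obtain i where i: "i < n" "v $ i \<noteq> 0" using v by (metis carrier_vecD eq_vecI index_zero_vec(1,2))
  have "0 < (cmod (v $ i))\<^sup>2" using i by simp
  also have "\<dots> \<le> s" unfolding s_def using i by (intro member_le_sum) auto
  finally have s: "0 < s" .
  define u where "u = complex_of_real (1 / sqrt s) \<cdot>\<^sub>v v"
  have u: "u \<in> carrier_vec n" using v by (simp add: u_def)
  have "A *\<^sub>v u = e \<cdot>\<^sub>v u" unfolding u_def using v A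
    by (simp add: mult_mat_vec[OF A] smult_smult_assoc mult.commute)
  moreover have "(\<Sum>i<n. (cmod (u $ i))\<^sup>2) = 1"
  proof -
    have "(\<Sum>i<n. (cmod (u $ i))\<^sup>2) = (\<Sum>i<n. (cmod (v $ i))\<^sup>2 / s)"
      using v s by (intro sum.cong) (auto simp: u_def norm_divide power_divide real_sqrt_pow2)
    also have "\<dots> = 1" using s by (simp add: sum_divide_distrib[symmetric] s_def)
    finally show ?thesis .
  qed
  ultimately show ?thesis using u by blast
qed



lemma hh_sum:
  fixes w :: "nat \<Rightarrow> complex" and c :: complex
  assumes "i < n" "j < n"
  shows "(\<Sum>k<n. ((if k = i then 1 else 0) - c * cnj (w k) * w i) * ((if k = j then 1 else 0) - c * w k * cnj (w j)))
    = (if i = j then 1 else 0) - 2 * c * w i * cnj (w j) + c * c * (\<Sum>k<n. cnj (w k) * w k) * w i * cnj (w j)"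
proof -
  have e: "\<And>k. ((if k = i then 1 else 0) - c * cnj (w k) * w i) * ((if k = j then 1 else 0) - c * w k * cnj (w j))
     = (if k = i then (if k = j then 1 else 0) else 0) - (if k = i then c * w k * cnj (w j) else 0)
       - (if k = j then c * cnj (w k) * w i else 0) + c * c * (cnj (w k) * w k) * w i * cnj (w j)"
    by (auto simp: algebra_simps)
  show ?thesis using assms
    by (simp only: e sum.distrib sum_subtractf sum.delta' finite_lessThan lessThan_iff sum_distrib_left[symmetric]
        sum_distrib_right[symmetric]) (auto simp: algebra_simps)
qed



lemma cnj_mult_self: "cnj z * z = complex_of_real ((cmod z)\<^sup>2)"
  by (metis complex_norm_square mult.commute)

lemma householder:
  assumes u: "u \<in> carrier_vec n" and n: "0 < n" and nu: "(\<Sum>i<n. (cmod (u $ i))\<^sup>2) = 1"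
  shows "\<exists>U c. unitary n U \<and> (\<forall>k<n. U $$ (k,0) = c * u $ k)"
proof -
  define r where "r = cmod (u $ 0)"
  define \<alpha> where "\<alpha> = (if u $ 0 = 0 then 1 else u $ 0 / complex_of_real r)"
  have a1: "cnj \<alpha> * \<alpha> = 1"
    by (auto simp: \<alpha>_def r_def cnj_mult_self norm_divide power_divide)
  have a2: "u $ 0 = \<alpha> * complex_of_real r"
    by (auto simp: \<alpha>_def r_def)
  define w where "w = (\<lambda>k. u $ k - (if k = 0 then \<alpha> else 0))"
  define s where "s = (\<Sum>k<n. (cmod (w k))\<^sup>2)"
  have w0: "w 0 = \<alpha> * complex_of_real (r - 1)" by (simp add: w_def a2 algebra_simps)
  have cma: "cmod \<alpha> = 1" by (auto simp: \<alpha>_def r_def norm_divide)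
  have s_eq: "s = 2 - 2 * r"
  proof -
    have "s = (cmod (w 0))\<^sup>2 + (\<Sum>k\<in>{..<n} - {0}. (cmod (w k))\<^sup>2)"
      unfolding s_def using n by (subst sum.remove[of _ 0]) auto
    also have "(\<Sum>k\<in>{..<n} - {0}. (cmod (w k))\<^sup>2) = (\<Sum>k\<in>{..<n} - {0}. (cmod (u $ k))\<^sup>2)"
      by (intro sum.cong) (auto simp: w_def)
    also have "\<dots> = 1 - r\<^sup>2" using nu n by (subst (asm) sum.remove[of _ 0]) (auto simp: r_def)
    also have "(cmod (w 0))\<^sup>2 = (r - 1)\<^sup>2" by (simp add: w0 norm_mult cma) (metis norm_of_real of_real_1 of_real_diff power2_abs)
    finally show ?thesis by (simp add: power2_eq_square algebra_simps)
  qed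
  show ?thesis
  proof (cases "s = 0")
    case True
    have "\<And>k. k < n \<Longrightarrow> w k = 0" using True unfolding s_def
      by (subst (asm) sum_nonneg_eq_0_iff) auto
    hence uk: "\<And>k. k < n \<Longrightarrow> u $ k = (if k = 0 then \<alpha> else 0)" by (auto simp: w_def)
    have "unitary n (1\<^sub>m n)" by (intro unitaryI) auto
    moreover have "\<forall>k<n. 1\<^sub>m n $$ (k,0) = cnj \<alpha> * u $ k" using n uk a1 by auto
    ultimately show ?thesis by blast
  next
    case False
    define c where "c = complex_of_real (2 / s)"
    define H where "H = mat n n (\<lambda>(i,j). (if i = j then 1 else 0) - c * w i * cnj (w j))"
    have H: "H \<in> carrier_mat n n" by (simp add: H_def)
    have sw: "(\<Sum>k<n. cnj (w k) * w k) = complex_of_real s"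
      by (simp add: s_def cnj_mult_self)
    have "adj H * H = 1\<^sub>m n"
    proof (rule eq_matI)
      fix i j assume ij: "i < dim_row (1\<^sub>m n)" "j < dim_col (1\<^sub>m n)"
      hence ij: "i < n" "j < n" by auto
      have "(adj H * H) $$ (i,j) = (\<Sum>k<n. ((if k = i then 1 else 0) - c * cnj (w k) * w i) * ((if k = j then 1 else 0) - c * w k * cnj (w j)))"
        using ij H by (subst mult_entry[of _ n n _ n]) (auto simp: H_def c_def intro!: sum.cong)
      also have "\<dots> = (if i = j then 1 else 0) + (c * c * complex_of_real s - 2 * c) * w i * cnj (w j)"
        unfolding hh_sum[OF ij] sw by (simp add: algebra_simps)
      also have "c * c * complex_of_real s - 2 * c = 0" using False
        by (simp add: c_def field_simps power2_eq_square)
      finally show "(adj H * H) $$ (i,j) = 1\<^sub>m n $$ (i,j)" using ij by simp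
    qed (use H in auto)
    hence "unitary n H" using H by (intro unitaryI)
    moreover have "\<forall>k<n. H $$ (k,0) = cnj \<alpha> * u $ k"
    proof (intro allI impI)
      fix k assume k: "k < n"
      have r1: "r \<noteq> 1" using False s_eq by auto
      have "c * cnj (w 0) = - cnj \<alpha>" using r1 False s_eq
      proof -
        have "complex_of_real (s + r * 2) = 2" using s_eq by simp
        hence sc: "complex_of_real s + complex_of_real r * 2 = 2" by simp
        show ?thesis using r1 False s_eq by (simp add: c_def w0 field_simps) (simp add: distrib_left[symmetric] sc)
      qed
      note hc = this
      have "H $$ (k,0) = (if k = 0 then 1 else 0) - w k * (c * cnj (w 0))" using k n
        by (simp add: H_def algebra_simps)
      also have "\<dots> = (if k = 0 then 1 else 0) + cnj \<alpha> * w k" by (simp add: hc)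
      also have "\<dots> = cnj \<alpha> * u $ k" using a1 by (auto simp: w_def algebra_simps)
      finally show "H $$ (k,0) = cnj \<alpha> * u $ k" .
    qed
    ultimately show ?thesis by blast
  qed
qed



lemma mult_carrier_sq[simp]: "A \<in> carrier_mat n n \<Longrightarrow> B \<in> carrier_mat n n \<Longrightarrow> A * B \<in> carrier_mat n n"
  by (rule mult_carrier_mat)

lemma unitary_carrier: "unitary n U \<Longrightarrow> U \<in> carrier_mat n n" by (simp add: unitary_def)

lemma uni_cancel:
  assumes "unitary n U" "X \<in> carrier_mat n k"
  shows "adj U * (U * X) = X" "U * (adj U * X) = X"
proof -
  have U: "U \<in> carrier_mat n n" using assms unitary_def by auto
  have "adj U * (U * X) = (adj U * U) * X" using U assms by (simp add: assoc_mult_mat[of _ n n _ n _ k])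
  thus "adj U * (U * X) = X" using assms unfolding unitary_def by auto
  have "U * (adj U * X) = (U * adj U) * X" using U assms by (simp add: assoc_mult_mat[of _ n n _ n _ k])
  thus "U * (adj U * X) = X" using assms unfolding unitary_def by auto
qed

lemma udu_entry:
  assumes U: "U \<in> carrier_mat n n" and ij: "i < n" "j < n"
  shows "(U * dgr n d * adj U) $$ (i,j) = (\<Sum>k<n. U $$ (i,k) * complex_of_real (d k) * cnj (U $$ (j,k)))"
proof -
  have "(U * dgr n d * adj U) $$ (i,j) = (\<Sum>k<n. (U * dgr n d) $$ (i,k) * cnj (U $$ (j,k)))"
    using U ij by (subst mult_entry[of _ n n _ n]) auto
  also have "\<dots> = (\<Sum>k<n. U $$ (i,k) * complex_of_real (d k) * cnj (U $$ (j,k)))"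
  proof (intro sum.cong refl)
    fix k assume k: "k \<in> {..<n}"
    have "(U * dgr n d) $$ (i,k) = (\<Sum>l<n. U $$ (i,l) * (if l = k then complex_of_real (d k) else 0))"
      using U ij k by (subst mult_entry[of _ n n _ n]) (auto intro!: sum.cong)
    also have "\<dots> = U $$ (i,k) * complex_of_real (d k)" using k
      by (simp add: if_distrib[of "\<lambda>z. _ * z"] cong: if_cong)
    finally show "(U * dgr n d) $$ (i,k) * cnj (U $$ (j,k)) = U $$ (i,k) * complex_of_real (d k) * cnj (U $$ (j,k))" by simp
  qed
  finally show ?thesis .
qed

lemma adj_mult_entry:
  assumes U: "U \<in> carrier_mat n n" and V: "V \<in> carrier_mat n n" and ij: "i < n" "j < n"
  shows "(adj U * V) $$ (i,j) = (\<Sum>k<n. cnj (U $$ (k,i)) * V $$ (k,j))"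
  using assms by (subst mult_entry[of _ n n _ n]) auto

lemma spectral:
  "A \<in> carrier_mat n n \<Longrightarrow> adj A = A \<Longrightarrow> \<exists>U d. unitary n U \<and> A = U * dgr n d * adj U"
proof (induction n arbitrary: A)
  case 0
  have "unitary 0 (1\<^sub>m 0)" by (intro unitaryI) auto
  moreover have "A = 1\<^sub>m 0 * dgr 0 (\<lambda>_. 0) * adj (1\<^sub>m 0)" using 0 by (intro eq_matI) auto
  ultimately show ?case by blast
next
  case (Suc m)
  define n where "n = Suc m"
  have A: "A \<in> carrier_mat n n" and hA: "adj A = A" using Suc n_def by auto
  obtain e u where u: "u \<in> carrier_vec n" "A *\<^sub>v u = e \<cdot>\<^sub>v u" "(\<Sum>i<n. (cmod (u $ i))\<^sup>2) = 1"
    using unit_eigenvector[OF A] n_def by auto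
  obtain U1 c where U1u: "unitary n U1" and U1c: "\<forall>k<n. U1 $$ (k,0) = c * u $ k"
    using householder[OF u(1) _ u(3)] n_def by auto
  have U1: "U1 \<in> carrier_mat n n" using U1u unitary_def by auto
  define T where "T = adj U1 * A * U1"
  have T: "T \<in> carrier_mat n n" using U1 A by (simp add: T_def)
  have AU0: "(A * U1) $$ (k,0) = e * U1 $$ (k,0)" if k: "k < n" for k
  proof -
    have "(A * U1) $$ (k,0) = (\<Sum>l<n. A $$ (k,l) * (c * u $ l))"
      using A U1 k U1c n_def by (subst mult_entry[of _ n n _ n]) auto
    also have "\<dots> = c * (A *\<^sub>v u) $ k" using A u(1) k
      by (subst mult_vec_entry[of _ n n]) (auto simp: sum_distrib_left algebra_simps)
    also have "\<dots> = e * U1 $$ (k,0)" using u k U1c by simp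
    finally show ?thesis .
  qed
  have T0: "T $$ (i,0) = (if i = 0 then e else 0)" if i: "i < n" for i
  proof -
    have "T $$ (i,0) = (\<Sum>k<n. adj U1 $$ (i,k) * (A * U1) $$ (k,0))"
      unfolding T_def using U1 A i n_def by (subst assoc_mult_mat[of _ n n _ n _ n]) (auto simp: mult_entry[of _ n n _ n])
    also have "\<dots> = e * (\<Sum>k<n. adj U1 $$ (i,k) * U1 $$ (k,0))"
      by (simp add: AU0 sum_distrib_left algebra_simps)
    also have "(\<Sum>k<n. adj U1 $$ (i,k) * U1 $$ (k,0)) = (adj U1 * U1) $$ (i,0)"
      using U1 i n_def by (simp add: mult_entry[of _ n n _ n])
    also have "\<dots> = (if i = 0 then 1 else 0)" using U1u i n_def unfolding unitary_def by auto
    finally show ?thesis by simp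
  qed
  have hT: "adj T = T"
    unfolding T_def using U1 A hA by (simp add: adj_mult[of _ n n _ n] assoc_mult_mat[of _ n n _ n _ n])
  have Tsym: "T $$ (i,j) = cnj (T $$ (j,i))" if "i < n" "j < n" for i j
    using arg_cong[OF hT, of "\<lambda>M. M $$ (i,j)"] that T by auto
  have e_real: "e = complex_of_real (Re e)"
  proof -
    have "cnj e = e" using Tsym[of 0 0] T0[of 0] by (simp add: n_def)
    thus ?thesis by (metis Reals_cnj_iff of_real_Re)
  qed
  have T0': "T $$ (0,j) = (if j = 0 then e else 0)" if "j < n" for j
  proof -
    have "T $$ (0,j) = cnj (T $$ (j,0))" using Tsym[of 0 j] that n_def by simp
    also have "\<dots> = (if j = 0 then cnj e else 0)" using T0[OF that] by simp
    also have "cnj e = e" using e_real by (metis complex_cnj_complex_of_real)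
    finally show ?thesis .
  qed
  define A3 where "A3 = mat m m (\<lambda>(i,j). T $$ (Suc i, Suc j))"
  have A3: "A3 \<in> carrier_mat m m" by (simp add: A3_def)
  have hA3: "adj A3 = A3"
  proof (rule eq_matI)
    fix i j assume ij: "i < dim_row A3" "j < dim_col A3"
    thus "adj A3 $$ (i,j) = A3 $$ (i,j)" using Tsym[of "Suc j" "Suc i"] by (simp add: A3_def n_def)
  qed (auto simp: A3_def)
  obtain U3 d3 where U3u: "unitary m U3" and A3d: "A3 = U3 * dgr m d3 * adj U3"
    using Suc.IH[OF A3 hA3] by auto
  have U3: "U3 \<in> carrier_mat m m" using U3u unitary_def by auto
  define U2 where "U2 = mat n n (\<lambda>(i,j). if i = 0 then (if j = 0 then 1 else 0) else if j = 0 then 0 else U3 $$ (i-1, j-1))"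
  have U2: "U2 \<in> carrier_mat n n" by (simp add: U2_def)
  define d where "d = (\<lambda>i. if i = 0 then Re e else d3 (i - 1))"
  have U2u: "unitary n U2"
  proof (rule unitaryI[OF U2], rule eq_matI)
    fix i j assume ij: "i < dim_row (1\<^sub>m n)" "j < dim_col (1\<^sub>m n)"
    hence ij: "i < n" "j < n" by auto
    have "(adj U2 * U2) $$ (i,j) = (\<Sum>k<Suc m. cnj (U2 $$ (k,i)) * U2 $$ (k,j))"
      using adj_mult_entry[OF U2 U2 ij] n_def by simp
    also have "\<dots> = cnj (U2 $$ (0,i)) * U2 $$ (0,j) + (\<Sum>k<m. cnj (U2 $$ (Suc k,i)) * U2 $$ (Suc k,j))"
      by (rule sum.lessThan_Suc_shift)
    also have "\<dots> = 1\<^sub>m n $$ (i,j)"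
    proof (cases i; cases j)
      fix i' j' assume i': "i = Suc i'" and j': "j = Suc j'"
      have "(\<Sum>k<m. cnj (U2 $$ (Suc k,i)) * U2 $$ (Suc k,j)) = (adj U3 * U3) $$ (i',j')"
        using ij i' j' U3 n_def by (auto simp: U2_def adj_mult_entry[OF U3 U3] intro!: sum.cong)
      thus ?thesis using U3u ij i' j' n_def by (auto simp: U2_def unitary_def)
    qed (use ij n_def in \<open>auto simp: U2_def\<close>)
    finally show "(adj U2 * U2) $$ (i,j) = 1\<^sub>m n $$ (i,j)" .
  qed (auto simp: U2_def)
  have TU2: "T = U2 * dgr n d * adj U2"
  proof (rule eq_matI)
    fix i j assume ij: "i < dim_row (U2 * dgr n d * adj U2)" "j < dim_col (U2 * dgr n d * adj U2)"
    hence ij: "i < n" "j < n" using U2 by auto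
    have "(U2 * dgr n d * adj U2) $$ (i,j) = (\<Sum>k<Suc m. U2 $$ (i,k) * complex_of_real (d k) * cnj (U2 $$ (j,k)))"
      using udu_entry[OF U2 ij] n_def by simp
    also have "\<dots> = U2 $$ (i,0) * complex_of_real (d 0) * cnj (U2 $$ (j,0)) + (\<Sum>k<m. U2 $$ (i,Suc k) * complex_of_real (d (Suc k)) * cnj (U2 $$ (j,Suc k)))"
      by (rule sum.lessThan_Suc_shift)
    also have "\<dots> = T $$ (i,j)"
    proof (cases i; cases j)
      fix i' j' assume i': "i = Suc i'" and j': "j = Suc j'"
      have "(\<Sum>k<m. U2 $$ (i,Suc k) * complex_of_real (d (Suc k)) * cnj (U2 $$ (j,Suc k))) = (U3 * dgr m d3 * adj U3) $$ (i',j')"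
        using ij i' j' U3 n_def by (auto simp: U2_def d_def udu_entry[OF U3] intro!: sum.cong)
      also have "\<dots> = T $$ (i,j)" using A3d[symmetric] ij i' j' n_def by (auto simp: A3_def)
      finally show ?thesis using ij i' j' n_def by (auto simp: U2_def)
    qed (use ij n_def T0 T0' e_real[symmetric] in \<open>auto simp: U2_def d_def\<close>)
    finally show "T $$ (i,j) = (U2 * dgr n d * adj U2) $$ (i,j)" by simp
  qed (use T U2 in auto)
  have "A = U1 * T * adj U1"
    unfolding T_def using U1 A U1u by (simp add: assoc_mult_mat[of _ n n _ n _ n] uni_cancel U1u[unfolded unitary_def])
  also have "\<dots> = (U1 * U2) * dgr n d * adj (U1 * U2)"
    unfolding TU2 using U1 U2 by (simp add: assoc_mult_mat[of _ n n _ n _ n] adj_mult[of _ n n _ n])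
  finally show ?case using unitary_mult[OF U1u U2u] n_def by blast
qed



definition qf :: "nat \<Rightarrow> complex mat \<Rightarrow> complex vec \<Rightarrow> complex" where
  "qf n M v = (\<Sum>i<n. cnj (v $ i) * (M *\<^sub>v v) $ i)"

lemma psd_qf: "psd n M \<longleftrightarrow> hermitian n M \<and> (\<forall>v. dim_vec v = n \<longrightarrow> 0 \<le> Re (qf n M v))"
  by (simp add: psd_def qf_def)

lemma adj_vec_swap:
  assumes V: "V \<in> carrier_mat n m" and v: "v \<in> carrier_vec m" and y: "y \<in> carrier_vec n"
  shows "(\<Sum>i<m. cnj (v $ i) * (adj V *\<^sub>v y) $ i) = (\<Sum>k<n. cnj ((V *\<^sub>v v) $ k) * y $ k)"
proof -
  have "(\<Sum>i<m. cnj (v $ i) * (adj V *\<^sub>v y) $ i) = (\<Sum>i<m. \<Sum>k<n. cnj (v $ i) * cnj (V $$ (k,i)) * y $ k)"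
    using V y by (auto simp: mult_vec_entry[of _ m n] sum_distrib_left algebra_simps intro!: sum.cong)
  also have "\<dots> = (\<Sum>k<n. \<Sum>i<m. cnj (v $ i) * cnj (V $$ (k,i)) * y $ k)" by (rule sum.swap)
  also have "\<dots> = (\<Sum>k<n. cnj ((V *\<^sub>v v) $ k) * y $ k)"
    using V v by (auto simp: mult_vec_entry[of _ n m] sum_distrib_right sum_distrib_left algebra_simps intro!: sum.cong)
  finally show ?thesis .
qed

lemma qf_congr:
  assumes V: "V \<in> carrier_mat n n" and P: "P \<in> carrier_mat n n" and v: "v \<in> carrier_vec n"
  shows "qf n (adj V * P * V) v = qf n P (V *\<^sub>v v)"
proof -
  have "(adj V * P * V) *\<^sub>v v = adj V *\<^sub>v (P *\<^sub>v (V *\<^sub>v v))"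
    using V P v by (simp add: assoc_mult_mat_vec[of _ n n _ n])
  thus ?thesis unfolding qf_def using adj_vec_swap[OF V v, of "P *\<^sub>v (V *\<^sub>v v)"] V P v by simp
qed

lemma dgr_mult_vec: "w \<in> carrier_vec n \<Longrightarrow> k < n \<Longrightarrow> (dgr n d *\<^sub>v w) $ k = complex_of_real (d k) * w $ k"
  by (simp add: mult_vec_entry[of _ n n] if_distrib[of "\<lambda>z. z * _"] cong: if_cong)

lemma dgr_mult_left: "M \<in> carrier_mat n m \<Longrightarrow> i < n \<Longrightarrow> j < m \<Longrightarrow> (dgr n d * M) $$ (i,j) = complex_of_real (d i) * M $$ (i,j)"
  by (simp add: mult_entry[of _ n n _ m] if_distrib[of "\<lambda>z. z * _"] cong: if_cong)

lemma dgr_mult_right: "M \<in> carrier_mat m n \<Longrightarrow> i < m \<Longrightarrow> j < n \<Longrightarrow> (M * dgr n d) $$ (i,j) = M $$ (i,j) * complex_of_real (d j)"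
  by (simp add: mult_entry[of _ m n _ n] if_distrib[of "\<lambda>z. _ * z"] cong: if_cong)

lemma qf_udu:
  assumes U: "U \<in> carrier_mat n n" and v: "v \<in> carrier_vec n"
  shows "qf n (U * dgr n d * adj U) v = (\<Sum>k<n. complex_of_real (d k * (cmod ((adj U *\<^sub>v v) $ k))\<^sup>2))"
proof -
  define w where "w = adj U *\<^sub>v v"
  have w: "w \<in> carrier_vec n" using U v unfolding w_def by (metis adj_carrier mult_mat_vec_carrier)
  have dw: "dgr n d *\<^sub>v w \<in> carrier_vec n" by (rule mult_mat_vec_carrier[OF dgr_carrier w])
  have "(U * dgr n d * adj U) *\<^sub>v v = adj (adj U) *\<^sub>v (dgr n d *\<^sub>v w)"
    using U v w by (simp add: assoc_mult_mat_vec[of "U * dgr n d" n n "adj U" n] assoc_mult_mat_vec[of U n n "dgr n d" n] w_def)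
  hence "qf n (U * dgr n d * adj U) v = (\<Sum>k<n. cnj (w $ k) * (dgr n d *\<^sub>v w) $ k)"
    unfolding qf_def using adj_vec_swap[of "adj U" n n v "dgr n d *\<^sub>v w"] U v w dw by (simp add: w_def)
  also have "\<dots> = (\<Sum>k<n. complex_of_real (d k * (cmod (w $ k))\<^sup>2))"
  proof (intro sum.cong refl)
    fix k assume k: "k \<in> {..<n}"
    have "cnj (w $ k) * (dgr n d *\<^sub>v w) $ k = complex_of_real (d k) * (cnj (w $ k) * w $ k)"
      using w k by (simp add: dgr_mult_vec mult.left_commute)
    also have "\<dots> = complex_of_real (d k * (cmod (w $ k))\<^sup>2)" by (simp only: cnj_mult_self of_real_mult)
    finally show "cnj (w $ k) * (dgr n d *\<^sub>v w) $ k = complex_of_real (d k * (cmod (w $ k))\<^sup>2)" .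
  qed
  finally show ?thesis by (simp add: w_def)
qed




lemma adj_udu: "U \<in> carrier_mat n n \<Longrightarrow> adj (U * dgr n d * adj U) = U * dgr n d * adj U"
proof -
  assume U: "U \<in> carrier_mat n n"
  have "adj (U * dgr n d * adj U) = adj (adj U) * adj (U * dgr n d)"
    using U by (intro adj_mult[of _ n n _ n]) auto
  also have "\<dots> = U * (dgr n d * adj U)" using U by (simp add: adj_mult[of _ n n _ n])
  also have "\<dots> = U * dgr n d * adj U" using U by (simp add: assoc_mult_mat[of _ n n _ n _ n])
  finally show ?thesis .
qed

lemma psd_udu:
  assumes U: "U \<in> carrier_mat n n" and d: "\<And>i. i < n \<Longrightarrow> 0 \<le> d i"
  shows "psd n (U * dgr n d * adj U)"
  unfolding psd_qf hermitian_def
proof (intro conjI allI impI)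
  show "U * dgr n d * adj U \<in> carrier_mat n n" using U by simp
  show "adj (U * dgr n d * adj U) = U * dgr n d * adj U" using adj_udu[OF U] .
  fix v :: "complex vec" assume "dim_vec v = n"
  hence v: "v \<in> carrier_vec n" by (intro carrier_vecI)
  have "Re (qf n (U * dgr n d * adj U) v) = (\<Sum>k<n. d k * (cmod ((adj U *\<^sub>v v) $ k))\<^sup>2)"
    unfolding qf_udu[OF U v] Re_sum by simp
  also have "\<dots> \<ge> 0" using d by (intro sum_nonneg mult_nonneg_nonneg) auto
  finally show "0 \<le> Re (qf n (U * dgr n d * adj U) v)" .
qed

lemma psd_eig_nonneg:
  assumes Uu: "unitary n U" and P: "psd n (U * dgr n d * adj U)" and i: "i < n"
  shows "0 \<le> d i"
proof -
  have U: "U \<in> carrier_mat n n" using Uu unitary_def by auto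
  define v where "v = col U i"
  have v: "v \<in> carrier_vec n" using U unfolding v_def by (intro carrier_vecI) simp
  have av: "(adj U *\<^sub>v v) $ k = (if k = i then 1 else 0)" if k: "k < n" for k
  proof -
    have "(adj U *\<^sub>v v) $ k = (\<Sum>l<n. adj U $$ (k,l) * U $$ (l,i))"
      using U i k unfolding v_def by (subst mult_vec_entry[of _ n n]) (auto intro!: carrier_vecI)
    also have "\<dots> = (adj U * U) $$ (k,i)"
      using U i k by (subst mult_entry[of _ n n _ n]) auto
    finally show ?thesis using Uu i k unfolding unitary_def by simp
  qed
  have "Re (qf n (U * dgr n d * adj U) v) = (\<Sum>k<n. d k * (cmod ((adj U *\<^sub>v v) $ k))\<^sup>2)"
    unfolding qf_udu[OF U v] Re_sum by simp
  also have "\<dots> = (\<Sum>k<n. if k = i then d i else 0)" by (rule sum.cong) (auto simp: av)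
  also have "\<dots> = d i" using i by simp
  finally have eq: "Re (qf n (U * dgr n d * adj U) v) = d i" .
  have "0 \<le> Re (qf n (U * dgr n d * adj U) v)" using P v unfolding psd_qf by auto
  thus ?thesis using eq by simp
qed


lemma dgr_mult_assoc: "X \<in> carrier_mat n k \<Longrightarrow> dgr n d * (dgr n e * X) = dgr n (\<lambda>i. d i * e i) * X"
  by (simp add: assoc_mult_mat[of _ n n _ n _ k, symmetric] dgr_mult)

lemma psd_herm: "psd n M \<Longrightarrow> M \<in> carrier_mat n n \<and> adj M = M"
  by (simp add: psd_def hermitian_def)

lemma udu_sq:
  assumes Vu: "unitary n V"
  shows "(V * dgr n s * adj V) * (V * dgr n s * adj V) = V * dgr n (\<lambda>i. s i * s i) * adj V"
proof -
  have V: "V \<in> carrier_mat n n" using Vu unitary_def by auto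
  have "(V * dgr n s * adj V) * (V * dgr n s * adj V) = V * (dgr n s * (adj V * (V * (dgr n s * adj V))))"
    using V by (simp add: assoc_mult_mat[of _ n n _ n _ n])
  also have "adj V * (V * (dgr n s * adj V)) = dgr n s * adj V"
    using V by (intro uni_cancel(1)[OF Vu]) auto
  also have "V * (dgr n s * (dgr n s * adj V)) = V * dgr n (\<lambda>i. s i * s i) * adj V"
    using V by (simp add: dgr_mult_assoc[of _ n n] assoc_mult_mat[of _ n n _ n _ n])
  finally show ?thesis .
qed

lemma udu_cancel_left:
  assumes Uu: "unitary n U" and D: "D \<in> carrier_mat n n" and W: "W \<in> carrier_mat n n"
  shows "adj U * (U * D * adj U) * W = D * (adj U * W)"
proof -
  have U: "U \<in> carrier_mat n n" using Uu unitary_def by auto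
  have "adj U * (U * D * adj U) * W = adj U * (U * (D * (adj U * W)))"
    using U D W by (simp add: assoc_mult_mat[of _ n n _ n _ n])
  also have "\<dots> = D * (adj U * W)" using U D W by (intro uni_cancel(1)[OF Uu]) auto
  finally show ?thesis .
qed

lemma udu_cancel_right:
  assumes Uu: "unitary n U" and D: "D \<in> carrier_mat n n" and W: "W \<in> carrier_mat n n"
  shows "W * (U * D * adj U) * U = (W * U) * D"
proof -
  have U: "U \<in> carrier_mat n n" using Uu unitary_def by auto
  have "W * (U * D * adj U) * U = W * (U * (D * (adj U * U)))"
    using U D W by (simp add: assoc_mult_mat[of _ n n _ n _ n])
  also have "\<dots> = (W * U) * D" using U D W Uu by (simp add: unitary_def assoc_mult_mat[of _ n n _ n _ n])
  finally show ?thesis .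
qed

lemma sqrt_unique:
  assumes S1: "psd n S1" and S2: "psd n S2" and eq: "S1 * S1 = S2 * S2"
  shows "S1 = S2"
proof -
  obtain V s where Vu: "unitary n V" and S1e: "S1 = V * dgr n s * adj V"
    using spectral psd_herm[OF S1] by blast
  obtain R t where Ru: "unitary n R" and S2e: "S2 = R * dgr n t * adj R"
    using spectral psd_herm[OF S2] by blast
  have V: "V \<in> carrier_mat n n" and R: "R \<in> carrier_mat n n" using Vu Ru unitary_def by auto
  have s0: "\<And>i. i < n \<Longrightarrow> 0 \<le> s i" using psd_eig_nonneg[OF Vu] S1 S1e by blast
  have t0: "\<And>i. i < n \<Longrightarrow> 0 \<le> t i" using psd_eig_nonneg[OF Ru] S2 S2e by blast
  define C where "C = adj R * V"
  have C: "C \<in> carrier_mat n n" using R V by (simp add: C_def)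
  have sq: "V * dgr n (\<lambda>i. s i * s i) * adj V = R * dgr n (\<lambda>i. t i * t i) * adj R"
    using eq unfolding S1e S2e udu_sq[OF Vu] udu_sq[OF Ru] .
  have "dgr n (\<lambda>i. t i * t i) * C = adj R * (R * dgr n (\<lambda>i. t i * t i) * adj R) * V"
    unfolding C_def using udu_cancel_left[OF Ru _ V] by simp
  also have "\<dots> = adj R * (V * dgr n (\<lambda>i. s i * s i) * adj V) * V" by (simp add: sq)
  also have "\<dots> = C * dgr n (\<lambda>i. s i * s i)" unfolding C_def using udu_cancel_right[OF Vu _ adj_carrier[OF R]] by simp
  finally have key: "dgr n (\<lambda>i. t i * t i) * C = C * dgr n (\<lambda>i. s i * s i)" .
  have key2: "dgr n t * C = C * dgr n s"
  proof (rule eq_matI)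
    fix i j assume ij: "i < dim_row (C * dgr n s)" "j < dim_col (C * dgr n s)"
    hence ij: "i < n" "j < n" using C by auto
    have e: "complex_of_real (t i * t i) * C $$ (i,j) = C $$ (i,j) * complex_of_real (s j * s j)"
      using arg_cong[OF key, of "\<lambda>M. M $$ (i,j)"] C ij by (simp add: dgr_mult_left dgr_mult_right)
    show "(dgr n t * C) $$ (i,j) = (C * dgr n s) $$ (i,j)"
    proof (cases "C $$ (i,j) = 0")
      case True thus ?thesis using C ij by (simp add: dgr_mult_left dgr_mult_right)
    next
      case False
      have "C $$ (i,j) * complex_of_real (t i * t i) = C $$ (i,j) * complex_of_real (s j * s j)"
        using e by (metis mult.commute)
      hence "complex_of_real (t i * t i) = complex_of_real (s j * s j)" using False mult_cancel_left by blast
      hence "t i * t i = s j * s j" by (simp only: of_real_eq_iff)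
      hence "t i = s j" using s0 t0 ij by (metis abs_of_nonneg real_sqrt_abs2)
      thus ?thesis using C ij by (simp add: dgr_mult_left dgr_mult_right mult.commute)
    qed
  qed (use C in auto)
  have "S2 * V = R * (dgr n t * C)"
    unfolding S2e C_def using R V by (simp add: assoc_mult_mat[of _ n n _ n _ n])
  also have "\<dots> = R * (C * dgr n s)" by (simp only: key2)
  also have "\<dots> = R * (adj R * (V * dgr n s))"
    unfolding C_def using R V by (simp add: assoc_mult_mat[of _ n n _ n _ n])
  also have "\<dots> = V * dgr n s" using V by (intro uni_cancel(2)[OF Ru]) auto
  also have "\<dots> = S1 * V" unfolding S1e using V Vu by (simp add: assoc_mult_mat[of _ n n _ n _ n] unitary_def)
  finally have SV: "S2 * V = S1 * V" .
  have S1c: "S1 \<in> carrier_mat n n" and S2c: "S2 \<in> carrier_mat n n" using S1 S2 psd_herm by auto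
  have "S2 = S2 * (V * adj V)" using S2c Vu by (simp add: unitary_def)
  also have "\<dots> = (S2 * V) * adj V" using S2c V by (simp add: assoc_mult_mat[of _ n n _ n _ n])
  also have "\<dots> = (S1 * V) * adj V" by (simp add: SV)
  also have "\<dots> = S1 * (V * adj V)" using S1c V by (simp add: assoc_mult_mat[of _ n n _ n _ n])
  also have "\<dots> = S1" using S1c Vu by (simp add: unitary_def)
  finally show ?thesis by simp
qed

lemma psd_sqrt_eq:
  assumes S: "psd n S" and M: "S * S = M"
  shows "psd_sqrt M = S"
proof -
  have Sc: "S \<in> carrier_mat n n" using psd_herm[OF S] by auto
  have dM: "dim_row M = n" using M Sc by auto
  show ?thesis unfolding psd_sqrt_def dM
  proof (rule the_equality)
    show "psd n S \<and> S * S = M" using S M by auto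
    fix S' assume "psd n S' \<and> S' * S' = M"
    thus "S' = S" using sqrt_unique[of n S' S] S M by auto
  qed
qed

lemma mtrace_udu:
  assumes Uu: "unitary n U" and D: "D \<in> carrier_mat n n"
  shows "mtrace (U * D * adj U) = mtrace D"
proof -
  have U: "U \<in> carrier_mat n n" using Uu unitary_def by auto
  have "mtrace (U * D * adj U) = mtrace (U * (D * adj U))" using U D by (simp add: assoc_mult_mat[of _ n n _ n _ n])
  also have "\<dots> = mtrace ((D * adj U) * U)" using U D by (intro mtrace_comm[of _ n n]) auto
  also have "(D * adj U) * U = D" using U D Uu by (simp add: assoc_mult_mat[of _ n n _ n _ n] unitary_def)
  finally show ?thesis .
qed

lemma mtrace_congr:
  assumes Uu: "unitary n U" and P: "P \<in> carrier_mat n n"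
  shows "mtrace (adj U * P * U) = mtrace P"
proof -
  have U: "U \<in> carrier_mat n n" using Uu unitary_def by auto
  have "mtrace (adj U * P * U) = mtrace (U * (adj U * P))" using U P by (intro mtrace_comm[of _ n n]) auto
  also have "U * (adj U * P) = P" using P by (intro uni_cancel(2)[OF Uu])
  finally show ?thesis .
qed

lemma trace_norm_udu:
  assumes Uu: "unitary n U" and X: "X = U * dgr n d * adj U"
  shows "trace_norm X = (\<Sum>i<n. \<bar>d i\<bar>)"
proof -
  have U: "U \<in> carrier_mat n n" using Uu unitary_def by auto
  have hX: "adj X = X" unfolding X by (rule adj_udu[OF U])
  define S where "S = U * dgr n (\<lambda>i. \<bar>d i\<bar>) * adj U"
  have S: "psd n S" unfolding S_def by (rule psd_udu[OF U]) auto
  have "S * S = U * dgr n (\<lambda>i. \<bar>d i\<bar> * \<bar>d i\<bar>) * adj U" unfolding S_def by (rule udu_sq[OF Uu])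
  also have "(\<lambda>i. \<bar>d i\<bar> * \<bar>d i\<bar>) = (\<lambda>i. d i * d i)" by (auto simp: abs_mult_self_eq)
  also have "U * dgr n (\<lambda>i. d i * d i) * adj U = adj X * X" unfolding hX unfolding X by (rule udu_sq[OF Uu, symmetric])
  finally have "psd_sqrt (adj X * X) = S" by (intro psd_sqrt_eq[OF S])
  hence "trace_norm X = Re (mtrace S)" by (simp add: trace_norm_def)
  also have "mtrace S = mtrace (dgr n (\<lambda>i. \<bar>d i\<bar>))" unfolding S_def by (rule mtrace_udu[OF Uu]) simp
  finally show ?thesis by (simp add: mtrace_dgr Re_sum)
qed

lemma psd_diag:
  assumes P: "psd n P" and i: "i < n"
  shows "P $$ (i,i) = complex_of_real (Re (P $$ (i,i)))" "0 \<le> Re (P $$ (i,i))"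
proof -
  have Pc: "P \<in> carrier_mat n n" and hP: "adj P = P" using psd_herm[OF P] by auto
  have "cnj (P $$ (i,i)) = P $$ (i,i)" using arg_cong[OF hP, of "\<lambda>M. M $$ (i,i)"] Pc i by simp
  thus "P $$ (i,i) = complex_of_real (Re (P $$ (i,i)))" by (metis Reals_cnj_iff of_real_Re)
  define v where "v = (unit_vec n i :: complex vec)"
  have v: "v \<in> carrier_vec n" by (simp add: v_def)
  have vk: "v $ k = (if k = i then 1 else 0)" if "k < n" for k using that i by (simp add: v_def)
  have Pv: "(P *\<^sub>v v) $ k = P $$ (k,i)" if "k < n" for k
    using Pc i that by (simp add: v_def mult_vec_entry[of _ n n] if_distrib[of "\<lambda>z. _ * z"] cong: if_cong)
  have "qf n P v = (\<Sum>k<n. (if k = i then P $$ (k,i) else 0))"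
    unfolding qf_def by (rule sum.cong) (auto simp: Pv vk)
  also have "\<dots> = P $$ (i,i)" using i by simp
  finally have "qf n P v = P $$ (i,i)" .
  moreover have "0 \<le> Re (qf n P v)" using P v unfolding psd_qf by auto
  ultimately show "0 \<le> Re (P $$ (i,i))" by simp
qed

lemma psd_trace_nonneg: assumes P: "psd n P" shows "0 \<le> Re (mtrace P)"
proof -
  have "dim_row P = n" using psd_herm[OF P] by auto
  hence "Re (mtrace P) = (\<Sum>i<n. Re (P $$ (i,i)))" by (simp add: mtrace_def)
  also have "\<dots> \<ge> 0" using psd_diag(2)[OF P] by (intro sum_nonneg) auto
  finally show ?thesis .
qed

lemma psd_congr:
  assumes P: "psd n P" and V: "V \<in> carrier_mat n n"
  shows "psd n (adj V * P * V)"
  unfolding psd_qf hermitian_def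
proof (intro conjI allI impI)
  have Pc: "P \<in> carrier_mat n n" and hP: "adj P = P" using psd_herm[OF P] by auto
  show "adj V * P * V \<in> carrier_mat n n" using Pc V by simp
  have "adj (adj V * P * V) = adj V * adj (adj V * P)" using Pc V by (intro adj_mult[of _ n n _ n]) auto
  also have "\<dots> = adj V * (P * V)" using Pc V hP by (simp add: adj_mult[of _ n n _ n])
  also have "\<dots> = adj V * P * V" using Pc V by (simp add: assoc_mult_mat[of _ n n _ n _ n])
  finally show "adj (adj V * P * V) = adj V * P * V" .
  fix v :: "complex vec" assume "dim_vec v = n"
  hence v: "v \<in> carrier_vec n" by (intro carrier_vecI)
  have Vv: "V *\<^sub>v v \<in> carrier_vec n" using V v by (rule mult_mat_vec_carrier)
  have "dim_vec (V *\<^sub>v v) = n" using V by simp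
  hence "0 \<le> Re (qf n P (V *\<^sub>v v))" using P unfolding psd_qf by blast
  thus "0 \<le> Re (qf n (adj V * P * V) v)" using qf_congr[OF V Pc v] by simp
qed



lemma trace_norm_upper:
  assumes P: "psd n P" and N: "psd n N" and X: "X = P - N"
  shows "trace_norm X \<le> Re (mtrace P) + Re (mtrace N)"
proof -
  have Pc: "P \<in> carrier_mat n n" and hP: "adj P = P" using psd_herm[OF P] by auto
  have Nc: "N \<in> carrier_mat n n" and hN: "adj N = N" using psd_herm[OF N] by auto
  have Xc: "X \<in> carrier_mat n n" using Pc Nc X by (simp add: minus_carrier_mat)
  have hX: "adj X = X" using X Pc Nc hP hN by (simp add: adj_minus)
  obtain U d where Uu: "unitary n U" and Xe: "X = U * dgr n d * adj U" using spectral[OF Xc hX] by blast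
  have U: "U \<in> carrier_mat n n" using Uu unitary_def by auto
  define P' where "P' = adj U * P * U"
  define N' where "N' = adj U * N * U"
  have P': "psd n P'" unfolding P'_def by (rule psd_congr[OF P U])
  have N': "psd n N'" unfolding N'_def by (rule psd_congr[OF N U])
  have "adj U * X * U = dgr n d * (adj U * U)" unfolding Xe by (rule udu_cancel_left[OF Uu]) (use U in auto)
  also have "\<dots> = dgr n d" using Uu by (simp add: unitary_def)
  finally have D1: "adj U * X * U = dgr n d" .
  have "adj U * X * U = (adj U * P - adj U * N) * U" unfolding X by (subst mult_minus_distrib_mat[of _ n n]) (use U Pc Nc in auto)
  also have "\<dots> = P' - N'" unfolding P'_def N'_def by (rule minus_mult_distrib_mat[of _ n n]) (use U Pc Nc in auto)
  finally have D2: "dgr n d = P' - N'" using D1 by simp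
  have P'c: "P' \<in> carrier_mat n n" and N'c: "N' \<in> carrier_mat n n" using P' N' psd_herm by auto
  have di: "\<bar>d i\<bar> \<le> Re (P' $$ (i,i)) + Re (N' $$ (i,i))" if i: "i < n" for i
  proof -
    have "complex_of_real (d i) = P' $$ (i,i) - N' $$ (i,i)"
      using arg_cong[OF D2, of "\<lambda>M. M $$ (i,i)"] i P'c N'c by simp
    hence "d i = Re (P' $$ (i,i)) - Re (N' $$ (i,i))" by (metis Re_complex_of_real minus_complex.simps(1))
    thus ?thesis using psd_diag(2)[OF P' i] psd_diag(2)[OF N' i] by linarith
  qed
  have "trace_norm X = (\<Sum>i<n. \<bar>d i\<bar>)" by (rule trace_norm_udu[OF Uu Xe])
  also have "\<dots> \<le> (\<Sum>i<n. Re (P' $$ (i,i)) + Re (N' $$ (i,i)))" by (intro sum_mono di) auto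
  also have "\<dots> = Re (mtrace P') + Re (mtrace N')" using P'c N'c by (simp add: mtrace_def sum.distrib)
  also have "mtrace P' = mtrace P" unfolding P'_def by (rule mtrace_congr[OF Uu Pc])
  also have "mtrace N' = mtrace N" unfolding N'_def by (rule mtrace_congr[OF Uu Nc])
  finally show ?thesis .
qed

lemma jordan_decomp:
  assumes Xc: "X \<in> carrier_mat n n" and hX: "adj X = X"
  shows "\<exists>P N. psd n P \<and> psd n N \<and> X = P - N \<and> trace_norm X = Re (mtrace P) + Re (mtrace N)"
proof -
  obtain U d where Uu: "unitary n U" and Xe: "X = U * dgr n d * adj U" using spectral[OF Xc hX] by blast
  have U: "U \<in> carrier_mat n n" using Uu unitary_def by auto
  define P where "P = U * dgr n (\<lambda>i. max (d i) 0) * adj U"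
  define N where "N = U * dgr n (\<lambda>i. max (- d i) 0) * adj U"
  have P: "psd n P" unfolding P_def by (rule psd_udu[OF U]) auto
  have N: "psd n N" unfolding N_def by (rule psd_udu[OF U]) auto
  have "P - N = (U * dgr n (\<lambda>i. max (d i) 0) - U * dgr n (\<lambda>i. max (- d i) 0)) * adj U"
    unfolding P_def N_def by (rule minus_mult_distrib_mat[of _ n n, symmetric]) (use U in auto)
  also have "\<dots> = U * (dgr n (\<lambda>i. max (d i) 0) - dgr n (\<lambda>i. max (- d i) 0)) * adj U"
    by (subst mult_minus_distrib_mat[of _ n n]) (use U in auto)
  also have "dgr n (\<lambda>i. max (d i) 0) - dgr n (\<lambda>i. max (- d i) 0) = dgr n d"
    unfolding dgr_minus by (rule arg_cong[of _ _ "dgr n"]) auto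
  finally have X: "X = P - N" using Xe by simp
  have "Re (mtrace P) = (\<Sum>i<n. max (d i) 0)" unfolding P_def mtrace_udu[OF Uu dgr_carrier] mtrace_dgr Re_sum by simp
  moreover have "Re (mtrace N) = (\<Sum>i<n. max (- d i) 0)" unfolding N_def mtrace_udu[OF Uu dgr_carrier] mtrace_dgr Re_sum by simp
  moreover have "trace_norm X = (\<Sum>i<n. \<bar>d i\<bar>)" by (rule trace_norm_udu[OF Uu Xe])
  moreover have "(\<Sum>i<n. \<bar>d i\<bar>) = (\<Sum>i<n. max (d i) 0) + (\<Sum>i<n. max (- d i) 0)"
    by (subst sum.distrib[symmetric]) (rule sum.cong; auto)
  ultimately have "trace_norm X = Re (mtrace P) + Re (mtrace N)" by simp
  thus ?thesis using P N X by blast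
qed



lemma idx_lt: "x < a \<Longrightarrow> y < (b::nat) \<Longrightarrow> x * b + y < a * b"
proof -
  assume "x < a" "y < b"
  hence "x * b + y < Suc x * b" by simp
  also have "\<dots> \<le> a * b" using \<open>x < a\<close> by (intro mult_le_mono1) simp
  finally show ?thesis .
qed

lemma divmod_idx: "y < (b::nat) \<Longrightarrow> (x * b + y) div b = x" "y < (b::nat) \<Longrightarrow> (x * b + y) mod b = y"
  by auto

lemma div_lt: "r < a * (b::nat) \<Longrightarrow> r div b < a"
  by (simp add: less_mult_imp_div_less)
lemma mod_lt: "r < a * (b::nat) \<Longrightarrow> r mod b < b"
  by (metis mod_less_divisor mult_is_0 nat_neq_iff not_less_zero zero_less_iff_neq_zero)

lemma sum_blocks: "(\<Sum>r<a*b. g r) = (\<Sum>i<a. \<Sum>k<b. g (i*b + k :: nat))"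
proof -
  have "(\<Sum>r<a*b. g r) = (\<Sum>m<a. sum g {m * b..<m * b + b})" by (rule sum.nat_group[symmetric])
  also have "\<dots> = (\<Sum>i<a. \<Sum>k<b. g (i*b + k))"
  proof (rule sum.cong[OF refl])
    fix m
    have "sum g {m * b..<m * b + b} = sum g {0 + m*b..<b + m*b}" by (simp add: add.commute)
    also have "\<dots> = (\<Sum>i\<in>{0..<b}. g (i + m*b))" by (rule sum.shift_bounds_nat_ivl)
    also have "\<dots> = (\<Sum>k<b. g (m*b + k))" by (simp add: atLeast0LessThan add.commute)
    finally show "sum g {m * b..<m * b + b} = (\<Sum>k<b. g (m*b + k))" .
  qed
  finally show ?thesis .
qed

lemma ptrans_B_carrier[simp]: "ptrans_B dA dB X \<in> carrier_mat (dA*dB) (dA*dB)"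
  by (simp add: ptrans_B_def)
lemma tensor_id_carrier[simp]: "tensor_id dA dB E X \<in> carrier_mat (dA*dB) (dA*dB)"
  by (simp add: tensor_id_def)

lemma ptrans_B_herm:
  assumes X: "X \<in> carrier_mat (dA*dB) (dA*dB)" and hX: "adj X = X"
  shows "adj (ptrans_B dA dB X) = ptrans_B dA dB X"
proof (rule eq_matI)
  fix r c assume "r < dim_row (ptrans_B dA dB X)" "c < dim_col (ptrans_B dA dB X)"
  hence rc: "r < dA*dB" "c < dA*dB" by (auto simp: ptrans_B_def)
  have i1: "(c div dB) * dB + r mod dB < dA*dB" "(r div dB) * dB + c mod dB < dA*dB"
    using rc by (auto intro!: idx_lt div_lt mod_lt)
  have "X $$ ((r div dB) * dB + c mod dB, (c div dB) * dB + r mod dB) = cnj (X $$ ((c div dB) * dB + r mod dB, (r div dB) * dB + c mod dB))"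
    using arg_cong[OF hX, of "\<lambda>M. M $$ ((r div dB) * dB + c mod dB, (c div dB) * dB + r mod dB)"] X i1 by simp
  thus "adj (ptrans_B dA dB X) $$ (r,c) = ptrans_B dA dB X $$ (r,c)" using rc by (simp add: ptrans_B_def)
qed (auto simp: ptrans_B_def)

lemma ptrans_B_trace:
  assumes X: "X \<in> carrier_mat (dA*dB) (dA*dB)"
  shows "mtrace (ptrans_B dA dB X) = mtrace X"
  using X unfolding mtrace_def ptrans_B_def by (intro sum.cong) (auto simp: mult.commute)

lemma ptrans_BA:
  assumes X: "X \<in> carrier_mat (dA*dB) (dA*dB)"
  shows "ptrans_B dA dB (ptrans_A dA dB X) = mat (dA*dB) (dA*dB) (\<lambda>(r,c). X $$ (c,r))"
proof (rule eq_matI)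
  fix r c assume "r < dim_row (mat (dA*dB) (dA*dB) (\<lambda>(r,c). X $$ (c,r)))" "c < dim_col (mat (dA*dB) (dA*dB) (\<lambda>(r,c). X $$ (c,r)))"
  hence rc: "r < dA*dB" "c < dA*dB" by auto
  have i1: "(c div dB) * dB + r mod dB < dA*dB" "(r div dB) * dB + c mod dB < dA*dB"
    using rc by (auto intro!: idx_lt div_lt mod_lt)
  have b: "r mod dB < dB" "c mod dB < dB" using rc by (auto intro!: mod_lt)
  show "ptrans_B dA dB (ptrans_A dA dB X) $$ (r,c) = mat (dA*dB) (dA*dB) (\<lambda>(r,c). X $$ (c,r)) $$ (r,c)"
    using rc i1 b by (simp add: ptrans_B_def ptrans_A_def divmod_idx mult.commute[of _ dB] )
qed (auto simp: ptrans_B_def)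



lemma psd_transpose:
  assumes P: "psd n X"
  shows "psd n (mat n n (\<lambda>(r,c). X $$ (c,r)))"
  unfolding psd_qf hermitian_def
proof (intro conjI allI impI)
  have Xc: "X \<in> carrier_mat n n" and hX: "adj X = X" using psd_herm[OF P] by auto
  show "mat n n (\<lambda>(r,c). X $$ (c,r)) \<in> carrier_mat n n" by simp
  show "adj (mat n n (\<lambda>(r,c). X $$ (c,r))) = mat n n (\<lambda>(r,c). X $$ (c,r))"
  proof (rule eq_matI)
    fix i j assume ij: "i < dim_row (mat n n (\<lambda>(r,c). X $$ (c,r)))" "j < dim_col (mat n n (\<lambda>(r,c). X $$ (c,r)))"
    hence ij: "i < n" "j < n" by auto
    have "X $$ (j,i) = cnj (X $$ (i,j))" using arg_cong[OF hX, of "\<lambda>M. M $$ (j,i)"] Xc ij by simp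
    thus "adj (mat n n (\<lambda>(r,c). X $$ (c,r))) $$ (i,j) = mat n n (\<lambda>(r,c). X $$ (c,r)) $$ (i,j)" using ij by simp
  qed auto
  fix v :: "complex vec" assume dv: "dim_vec v = n"
  have v: "v \<in> carrier_vec n" using dv by (rule carrier_vecI)
  define T where "T = mat n n (\<lambda>(r,c). X $$ (c,r))"
  define w where "w = vec n (\<lambda>i. cnj (v $ i))"
  have w: "w \<in> carrier_vec n" by (simp add: w_def)
  have wj: "cnj (w $ j) = v $ j" if "j < n" for j using that by (simp add: w_def)
  have Tv: "(T *\<^sub>v v) $ i = (\<Sum>j<n. X $$ (j,i) * v $ j)" if "i < n" for i
    using v that by (subst mult_vec_entry[of _ n n]) (auto simp: T_def intro!: sum.cong)
  have Xw: "(X *\<^sub>v w) $ j = (\<Sum>i<n. X $$ (j,i) * cnj (v $ i))" if "j < n" for j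
    using w Xc that by (subst mult_vec_entry[of _ n n]) (auto simp: w_def intro!: sum.cong)
  have "qf n T v = (\<Sum>i<n. \<Sum>j<n. cnj (v $ i) * (X $$ (j,i) * v $ j))"
    unfolding qf_def by (rule sum.cong) (auto simp: Tv sum_distrib_left)
  also have "\<dots> = (\<Sum>j<n. \<Sum>i<n. cnj (v $ i) * (X $$ (j,i) * v $ j))" by (rule sum.swap)
  also have "\<dots> = (\<Sum>j<n. \<Sum>i<n. v $ j * (X $$ (j,i) * cnj (v $ i)))"
    by (intro sum.cong refl) (simp only: ac_simps)
  also have "\<dots> = qf n X w"
    unfolding qf_def by (rule sum.cong) (auto simp: Xw wj sum_distrib_left)
  finally have eq: "qf n T v = qf n X w" .
  have "0 \<le> Re (qf n X w)" using P unfolding psd_qf by (auto simp: w_def)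
  thus "0 \<le> Re (qf n (mat n n (\<lambda>(r,c). X $$ (c,r))) v)" using eq by (simp add: T_def)
qed



lemma psd_add:
  assumes A: "psd n A" and B: "psd n B"
  shows "psd n (A + B)"
  unfolding psd_qf hermitian_def
proof (intro conjI allI impI)
  have Ac: "A \<in> carrier_mat n n" and hA: "adj A = A" using psd_herm[OF A] by auto
  have Bc: "B \<in> carrier_mat n n" and hB: "adj B = B" using psd_herm[OF B] by auto
  show "A + B \<in> carrier_mat n n" using Bc by simp
  show "adj (A + B) = A + B" using Ac Bc hA hB by (simp add: adj_add)
  fix v :: "complex vec" assume dv: "dim_vec v = n"
  have v: "v \<in> carrier_vec n" using dv by (rule carrier_vecI)
  have e: "(A + B) *\<^sub>v v = A *\<^sub>v v + B *\<^sub>v v" using Ac Bc v by (rule add_mult_distrib_mat_vec)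
  have "qf n (A + B) v = qf n A v + qf n B v"
    unfolding qf_def e using Ac Bc by (simp add: distrib_left sum.distrib)
  moreover have "0 \<le> Re (qf n A v)" "0 \<le> Re (qf n B v)" using A B dv unfolding psd_qf by auto
  ultimately show "0 \<le> Re (qf n (A + B) v)" by simp
qed

lemma psd_smult:
  assumes A: "psd n A" and c: "0 \<le> c"
  shows "psd n (complex_of_real c \<cdot>\<^sub>m A)"
  unfolding psd_qf hermitian_def
proof (intro conjI allI impI)
  have Ac: "A \<in> carrier_mat n n" and hA: "adj A = A" using psd_herm[OF A] by auto
  show "complex_of_real c \<cdot>\<^sub>m A \<in> carrier_mat n n" using Ac by simp
  show "adj (complex_of_real c \<cdot>\<^sub>m A) = complex_of_real c \<cdot>\<^sub>m A" using hA by (simp add: adj_smult)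
  fix v :: "complex vec" assume dv: "dim_vec v = n"
  have v: "v \<in> carrier_vec n" using dv by (rule carrier_vecI)
  have e: "((complex_of_real c \<cdot>\<^sub>m A) *\<^sub>v v) $ i = complex_of_real c * (A *\<^sub>v v) $ i" if "i < n" for i
  proof -
    have "((complex_of_real c \<cdot>\<^sub>m A) *\<^sub>v v) $ i = (\<Sum>l<n. complex_of_real c * A $$ (i,l) * v $ l)"
      using Ac v that by (subst mult_vec_entry[of _ n n]) (auto intro!: sum.cong)
    also have "\<dots> = complex_of_real c * (A *\<^sub>v v) $ i"
      using Ac v that by (subst mult_vec_entry[of _ n n]) (auto simp: sum_distrib_left mult.assoc)
    finally show ?thesis .
  qed
  have "qf n (complex_of_real c \<cdot>\<^sub>m A) v = complex_of_real c * qf n A v"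
    unfolding qf_def by (simp add: e sum_distrib_left mult.left_commute)
  moreover have "0 \<le> Re (qf n A v)" using A dv unfolding psd_qf by auto
  ultimately show "0 \<le> Re (qf n (complex_of_real c \<cdot>\<^sub>m A) v)" using c by simp
qed

lemma tensor_id_ptrans_B:
  assumes X: "X \<in> carrier_mat (dA*dB) (dA*dB)"
  shows "ptrans_B dA dB (tensor_id dA dB E X) = tensor_id dA dB E (ptrans_B dA dB X)"
proof (rule eq_matI)
  fix r c assume "r < dim_row (tensor_id dA dB E (ptrans_B dA dB X))" "c < dim_col (tensor_id dA dB E (ptrans_B dA dB X))"
  hence rc: "r < dA*dB" "c < dA*dB" by (auto simp: tensor_id_def)
  have i1: "(c div dB) * dB + r mod dB < dA*dB" "(r div dB) * dB + c mod dB < dA*dB"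
    using rc by (auto intro!: idx_lt div_lt mod_lt)
  have b: "r mod dB < dB" "c mod dB < dB" using rc by (auto intro!: mod_lt)
  have inner: "mat dA dA (\<lambda>(i,j). ptrans_B dA dB X $$ (i * dB + r mod dB, j * dB + c mod dB))
     = mat dA dA (\<lambda>(i,j). X $$ (i * dB + c mod dB, j * dB + r mod dB))"
  proof (rule eq_matI)
    fix i j assume "i < dim_row (mat dA dA (\<lambda>(i,j). X $$ (i * dB + c mod dB, j * dB + r mod dB)))"
      "j < dim_col (mat dA dA (\<lambda>(i,j). X $$ (i * dB + c mod dB, j * dB + r mod dB)))"
    hence ij: "i < dA" "j < dA" by auto
    have "i * dB + r mod dB < dA * dB" "j * dB + c mod dB < dA * dB" using ij b by (auto intro!: idx_lt)
    thus "mat dA dA (\<lambda>(i,j). ptrans_B dA dB X $$ (i * dB + r mod dB, j * dB + c mod dB)) $$ (i,j)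
        = mat dA dA (\<lambda>(i,j). X $$ (i * dB + c mod dB, j * dB + r mod dB)) $$ (i,j)"
      using ij b by (simp add: ptrans_B_def divmod_idx)
  qed auto
  have L: "ptrans_B dA dB (tensor_id dA dB E X) $$ (r,c) = E (mat dA dA (\<lambda>(i,j). X $$ (i * dB + c mod dB, j * dB + r mod dB))) $$ (r div dB, c div dB)"
    using rc i1 b by (simp add: ptrans_B_def tensor_id_def divmod_idx)
  have R: "tensor_id dA dB E (ptrans_B dA dB X) $$ (r,c) = E (mat dA dA (\<lambda>(i,j). ptrans_B dA dB X $$ (i * dB + r mod dB, j * dB + c mod dB))) $$ (r div dB, c div dB)"
    using rc by (simp add: tensor_id_def)
  show "ptrans_B dA dB (tensor_id dA dB E X) $$ (r,c) = tensor_id dA dB E (ptrans_B dA dB X) $$ (r,c)"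
    unfolding L R inner ..
qed (auto simp: ptrans_B_def tensor_id_def)



lemma ptrans_B_lin:
  assumes A: "A \<in> carrier_mat (dA*dB) (dA*dB)" and B: "B \<in> carrier_mat (dA*dB) (dA*dB)"
  shows "ptrans_B dA dB (a \<cdot>\<^sub>m A + b \<cdot>\<^sub>m B) = a \<cdot>\<^sub>m ptrans_B dA dB A + b \<cdot>\<^sub>m ptrans_B dA dB B"
proof (rule eq_matI)
  fix r c assume "r < dim_row (a \<cdot>\<^sub>m ptrans_B dA dB A + b \<cdot>\<^sub>m ptrans_B dA dB B)"
    "c < dim_col (a \<cdot>\<^sub>m ptrans_B dA dB A + b \<cdot>\<^sub>m ptrans_B dA dB B)"
  hence rc: "r < dA*dB" "c < dA*dB" by (auto simp: ptrans_B_def)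
  have i1: "(c div dB) * dB + r mod dB < dA*dB" "(r div dB) * dB + c mod dB < dA*dB"
    using rc by (auto intro!: idx_lt div_lt mod_lt)
  show "ptrans_B dA dB (a \<cdot>\<^sub>m A + b \<cdot>\<^sub>m B) $$ (r,c) = (a \<cdot>\<^sub>m ptrans_B dA dB A + b \<cdot>\<^sub>m ptrans_B dA dB B) $$ (r,c)"
    using rc i1 A B by (simp add: ptrans_B_def)
qed (auto simp: ptrans_B_def)

lemma tensor_id_lin:
  assumes E: "linear_map_on dA E"
    and X: "X \<in> carrier_mat (dA*dB) (dA*dB)" and Y: "Y \<in> carrier_mat (dA*dB) (dA*dB)"
  shows "tensor_id dA dB E (a \<cdot>\<^sub>m X + b \<cdot>\<^sub>m Y) = a \<cdot>\<^sub>m tensor_id dA dB E X + b \<cdot>\<^sub>m tensor_id dA dB E Y"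
proof (rule eq_matI)
  fix r c assume "r < dim_row (a \<cdot>\<^sub>m tensor_id dA dB E X + b \<cdot>\<^sub>m tensor_id dA dB E Y)"
    "c < dim_col (a \<cdot>\<^sub>m tensor_id dA dB E X + b \<cdot>\<^sub>m tensor_id dA dB E Y)"
  hence rc: "r < dA*dB" "c < dA*dB" by (auto simp: tensor_id_def)
  have b: "r mod dB < dB" "c mod dB < dB" using rc by (auto intro!: mod_lt)
  have dl: "r div dB < dA" "c div dB < dA" using rc by (auto intro!: div_lt)
  define bX where "bX = mat dA dA (\<lambda>(i,j). X $$ (i * dB + r mod dB, j * dB + c mod dB))"
  define bY where "bY = mat dA dA (\<lambda>(i,j). Y $$ (i * dB + r mod dB, j * dB + c mod dB))"
  have bXc: "bX \<in> carrier_mat dA dA" "bY \<in> carrier_mat dA dA" by (auto simp: bX_def bY_def)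
  have blk: "mat dA dA (\<lambda>(i,j). (a \<cdot>\<^sub>m X + b \<cdot>\<^sub>m Y) $$ (i * dB + r mod dB, j * dB + c mod dB)) = a \<cdot>\<^sub>m bX + b \<cdot>\<^sub>m bY"
  proof (rule eq_matI)
    fix i j assume "i < dim_row (a \<cdot>\<^sub>m bX + b \<cdot>\<^sub>m bY)" "j < dim_col (a \<cdot>\<^sub>m bX + b \<cdot>\<^sub>m bY)"
    hence ij: "i < dA" "j < dA" by (auto simp: bX_def bY_def)
    have "i * dB + r mod dB < dA * dB" "j * dB + c mod dB < dA * dB" using ij b by (auto intro!: idx_lt)
    thus "mat dA dA (\<lambda>(i,j). (a \<cdot>\<^sub>m X + b \<cdot>\<^sub>m Y) $$ (i * dB + r mod dB, j * dB + c mod dB)) $$ (i,j) = (a \<cdot>\<^sub>m bX + b \<cdot>\<^sub>m bY) $$ (i,j)"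
      using ij X Y by (simp add: bX_def bY_def)
  qed (auto simp: bX_def bY_def)
  have Elin: "E (a \<cdot>\<^sub>m bX + b \<cdot>\<^sub>m bY) = a \<cdot>\<^sub>m E bX + b \<cdot>\<^sub>m E bY" using E bXc unfolding linear_map_on_def by blast
  have EXc: "E bX \<in> carrier_mat dA dA" "E bY \<in> carrier_mat dA dA" using E bXc unfolding linear_map_on_def by auto
  have "tensor_id dA dB E (a \<cdot>\<^sub>m X + b \<cdot>\<^sub>m Y) $$ (r,c) = E (a \<cdot>\<^sub>m bX + b \<cdot>\<^sub>m bY) $$ (r div dB, c div dB)"
    using rc by (simp add: tensor_id_def blk)
  also have "\<dots> = a * E bX $$ (r div dB, c div dB) + b * E bY $$ (r div dB, c div dB)"
    unfolding Elin using EXc dl by simp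
  also have "\<dots> = (a \<cdot>\<^sub>m tensor_id dA dB E X + b \<cdot>\<^sub>m tensor_id dA dB E Y) $$ (r,c)"
    using rc by (simp add: tensor_id_def bX_def bY_def)
  finally show "tensor_id dA dB E (a \<cdot>\<^sub>m X + b \<cdot>\<^sub>m Y) $$ (r,c) = (a \<cdot>\<^sub>m tensor_id dA dB E X + b \<cdot>\<^sub>m tensor_id dA dB E Y) $$ (r,c)" .
qed (auto simp: tensor_id_def)

lemma tensor_id_trace:
  assumes E: "cptp dA E" and X: "X \<in> carrier_mat (dA*dB) (dA*dB)"
  shows "mtrace (tensor_id dA dB E X) = mtrace X"
proof -
  define bk where "bk = (\<lambda>k. mat dA dA (\<lambda>(i,j). X $$ (i * dB + k, j * dB + k)))"
  have bkc: "bk k \<in> carrier_mat dA dA" for k by (simp add: bk_def)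
  have Ec: "E (bk k) \<in> carrier_mat dA dA" for k using E bkc unfolding cptp_def linear_map_on_def by auto
  have tp: "mtrace (E (bk k)) = mtrace (bk k)" for k using E bkc unfolding cptp_def by auto
  have "mtrace (tensor_id dA dB E X) = (\<Sum>r<dA*dB. E (bk (r mod dB)) $$ (r div dB, r div dB))"
    by (simp add: mtrace_def tensor_id_def bk_def)
  also have "\<dots> = (\<Sum>i<dA. \<Sum>k<dB. E (bk k) $$ (i, i))"
    by (subst sum_blocks) (auto simp: divmod_idx intro!: sum.cong)
  also have "\<dots> = (\<Sum>k<dB. \<Sum>i<dA. E (bk k) $$ (i, i))" by (rule sum.swap)
  also have "\<dots> = (\<Sum>k<dB. mtrace (bk k))"
    by (intro sum.cong refl) (metis (no_types) Ec carrier_matD(1) mtrace_def tp)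
  also have "\<dots> = (\<Sum>k<dB. \<Sum>i<dA. X $$ (i * dB + k, i * dB + k))"
    by (intro sum.cong refl) (simp add: mtrace_def bk_def)
  also have "\<dots> = (\<Sum>i<dA. \<Sum>k<dB. X $$ (i * dB + k, i * dB + k))" by (rule sum.swap)
  also have "\<dots> = (\<Sum>r<dA*dB. X $$ (r, r))" by (rule sum_blocks[symmetric])
  also have "\<dots> = mtrace X" using X by (simp add: mtrace_def)
  finally show ?thesis .
qed



theorem mainTheorem6:
  fixes dA dB :: nat and E1 E2 :: "complex mat \<Rightarrow> complex mat" and p :: real
    and \<rho> :: "complex mat"
  assumes "cptp dA E1" and "cptp dA E2"
    and "0 \<le> p" and "p \<le> 1"
    and "density_op (dA * dB) \<rho>"
  shows "negativity dA dB
           (complex_of_real p \<cdot>\<^sub>m tensor_id dA dB E1 \<rho>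
            + complex_of_real (1 - p) \<cdot>\<^sub>m tensor_id dA dB E2 (ptrans_A dA dB \<rho>))
         \<le> negativity dA dB \<rho>"
proof -
  note E1 = assms(1) and E2 = assms(2) and p0 = assms(3) and p1 = assms(4)
  define n where "n = dA * dB"
  have rho: "psd n \<rho>" and tr1: "mtrace \<rho> = 1" using assms(5) by (auto simp: density_op_def n_def)
  have rc: "\<rho> \<in> carrier_mat n n" and hr: "adj \<rho> = \<rho>" using psd_herm[OF rho] by auto
  define X where "X = ptrans_B dA dB \<rho>"
  have Xc: "X \<in> carrier_mat n n" by (simp add: X_def n_def)
  have hX: "adj X = X" unfolding X_def using ptrans_B_herm rc hr n_def by auto
  have trX: "mtrace X = 1" unfolding X_def using ptrans_B_trace rc tr1 n_def by auto
  obtain P N where P: "psd n P" and N: "psd n N" and XPN: "X = P - N"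
    and tnX: "trace_norm X = Re (mtrace P) + Re (mtrace N)"
    using jordan_decomp[OF Xc hX] by blast
  have Pc: "P \<in> carrier_mat n n" and Nc: "N \<in> carrier_mat n n" using P N psd_herm by auto
  have "mtrace X = mtrace P - mtrace N" unfolding XPN using Pc Nc by (rule mtrace_minus)
  hence trPN: "Re (mtrace P) - Re (mtrace N) = 1" using trX by (metis minus_complex.simps(1) one_complex.simps(1))
  have trN0: "0 \<le> Re (mtrace N)" by (rule psd_trace_nonneg[OF N])
  define RT where "RT = mat n n (\<lambda>(r,c). \<rho> $$ (c,r))"
  have RT: "psd n RT" unfolding RT_def by (rule psd_transpose[OF rho])
  have RTc: "RT \<in> carrier_mat n n" by (simp add: RT_def)
  have trRT: "mtrace RT = 1" using tr1 rc by (simp add: RT_def mtrace_def)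
  define T1 where "T1 = tensor_id dA dB E1"
  define T2 where "T2 = tensor_id dA dB E2"
  have T1c: "T1 Z \<in> carrier_mat n n" and T2c: "T2 Z \<in> carrier_mat n n" for Z by (simp_all add: T1_def T2_def n_def)
  have lin1: "linear_map_on dA E1" using E1 by (simp add: cptp_def)
  have psdT1: "psd n (T1 Z)" if "psd n Z" for Z using E1 that unfolding cptp_def T1_def n_def by blast
  have psdT2: "psd n (T2 Z)" if "psd n Z" for Z using E2 that unfolding cptp_def T2_def n_def by blast
  have trT1: "mtrace (T1 Z) = mtrace Z" if "Z \<in> carrier_mat n n" for Z
    unfolding T1_def using tensor_id_trace[OF E1] that n_def by auto
  have trT2: "mtrace (T2 Z) = mtrace Z" if "Z \<in> carrier_mat n n" for Z
    unfolding T2_def using tensor_id_trace[OF E2] that n_def by auto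
  define Y where "Y = complex_of_real p \<cdot>\<^sub>m tensor_id dA dB E1 \<rho> + complex_of_real (1 - p) \<cdot>\<^sub>m tensor_id dA dB E2 (ptrans_A dA dB \<rho>)"
  have PAc: "ptrans_A dA dB \<rho> \<in> carrier_mat n n" by (simp add: ptrans_A_def n_def)
  have "ptrans_B dA dB Y = complex_of_real p \<cdot>\<^sub>m ptrans_B dA dB (T1 \<rho>) + complex_of_real (1 - p) \<cdot>\<^sub>m ptrans_B dA dB (T2 (ptrans_A dA dB \<rho>))"
    unfolding Y_def T1_def T2_def by (rule ptrans_B_lin) simp_all
  also have "ptrans_B dA dB (T1 \<rho>) = T1 X" unfolding T1_def X_def using rc n_def by (simp add: tensor_id_ptrans_B)
  also have "ptrans_B dA dB (T2 (ptrans_A dA dB \<rho>)) = T2 RT"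
    unfolding T2_def RT_def using PAc rc n_def by (simp add: tensor_id_ptrans_B ptrans_BA)
  also have "X = 1 \<cdot>\<^sub>m P + (-1) \<cdot>\<^sub>m N" unfolding XPN using Pc Nc by (intro eq_matI) auto
  also have "T1 (1 \<cdot>\<^sub>m P + (-1) \<cdot>\<^sub>m N) = 1 \<cdot>\<^sub>m T1 P + (-1) \<cdot>\<^sub>m T1 N"
    unfolding T1_def using Pc Nc n_def by (intro tensor_id_lin[OF lin1]) auto
  finally have PY: "ptrans_B dA dB Y = complex_of_real p \<cdot>\<^sub>m (1 \<cdot>\<^sub>m T1 P + (-1) \<cdot>\<^sub>m T1 N) + complex_of_real (1 - p) \<cdot>\<^sub>m T2 RT" .
  define P' where "P' = complex_of_real p \<cdot>\<^sub>m T1 P + complex_of_real (1 - p) \<cdot>\<^sub>m T2 RT"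
  define N' where "N' = complex_of_real p \<cdot>\<^sub>m T1 N"
  have PY2: "ptrans_B dA dB Y = P' - N'" unfolding PY P'_def N'_def
    using T1c[of P] T1c[of N] T2c[of RT] by (intro eq_matI) (auto simp: algebra_simps)
  have P': "psd n P'" unfolding P'_def using p0 p1
    by (intro psd_add psd_smult psdT1 psdT2 P RT) auto
  have N': "psd n N'" unfolding N'_def using p0 by (intro psd_smult psdT1 N)
  have "trace_norm (ptrans_B dA dB Y) \<le> Re (mtrace P') + Re (mtrace N')"
    by (rule trace_norm_upper[OF P' N' PY2])
  also have "Re (mtrace P') = p * Re (mtrace P) + (1 - p)"
    unfolding P'_def using T1c[of P] T2c[of RT]
    by (simp add: mtrace_add[of _ n] mtrace_smult[of _ n] trT1[OF Pc] trT2[OF RTc] trRT)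
  also have "Re (mtrace N') = p * Re (mtrace N)"
    unfolding N'_def using T1c[of N] by (simp add: mtrace_smult[of _ n] trT1[OF Nc])
  finally have tnY: "trace_norm (ptrans_B dA dB Y) \<le> p * (Re (mtrace P) + Re (mtrace N)) + (1 - p)"
    by (simp add: algebra_simps)
  have S1: "1 \<le> Re (mtrace P) + Re (mtrace N)" using trPN trN0 by linarith
  have "p * (Re (mtrace P) + Re (mtrace N)) + (1 - p) \<le> Re (mtrace P) + Re (mtrace N)"
  proof -
    have "0 \<le> (1 - p) * (Re (mtrace P) + Re (mtrace N) - 1)" using p1 S1 by (intro mult_nonneg_nonneg) auto
    thus ?thesis by (simp add: algebra_simps)
  qed
  hence "trace_norm (ptrans_B dA dB Y) \<le> trace_norm X" using tnY tnX by linarith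
  thus ?thesis unfolding negativity_def Y_def[symmetric] X_def by simp
qed


end
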